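(* For every $F\subset E_d(\square_m)$ and $j\in\mathbb N$, $$-\nabla\cdot\big(\mathbf a^F\nabla V_m(F,j)\big)=\nabla\cdot\mathbf W_m(F,j)\quad\text{at every point of }\mathrm{int}(\square_m),$$ where $\mathbf W_m(F,j)$ is the anti-symmetric vector field on oriented edges of $\square_m$ $$\mathbf W_m(F,j)=\sum_{e\in E_d(\square_m)\setminus F}(\mathbf a^e-\mathbf a)\Big(\nabla V_m(F,j-1)-\nabla V_m(F\cup\{e\},j-2)+\nabla V_m(F\cup\{e\},j-1)\Big)+\sum_{e\in F}(\mathbf a^e-\mathbf a)\Big(\nabla V_m(F\setminus\{e\},j)-\nabla V_m(F,j-1)\Big).$$
   Context: Bond configurations on $\mathbb Z^d$. $\square_m=\mathbb Z^d\cap(-3^m/2,3^m/2)^d$; $E_d(U)$ nearest-neighbour edges inside $U$; $\partial U=\{x\in U:\exists y\sim x,y\notin U\}$, $\mathrm{int}(U)=U\setminus\partial U$. $\nabla u(x,y)=u(y)-u(x)$; for a function $\mathbf b$ on edges and a vector field $W$, $(\mathbf bW)(x,y)=\mathbf b(\{x,y\})W(x,y)$; divergence $\nabla\cdot W(x)=\sum_{y\sim x}W(x,y)$. Fix $\xi\in\mathbb R^d$; for each configuration $\mathbf b$, $v_m(\mathbf b)$ is a fixed function on $\square_m$ with $v_m(\mathbf b)=\xi\cdot x$ on $\partial\square_m$ and $\nabla\cdot(\mathbf b\nabla v_m(\mathbf b))=0$ at every $x\in\mathrm{int}(\square_m)$. $\mathbf a^G(e)=\mathbf 1_{e\in G}+\mathbf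 a(e)\mathbf 1_{e\notin G}$, $\mathbf a^e=\mathbf a^{\{e\}}$; $D_Gf(\mathbf a)=\sum_{G'\subset G}(-1)^{|G\setminus G'|}f(\mathbf a^{G'})$. $V_m(F,j)=\sum_{G\subset E_d(\square_m)\setminus F,|G|=j}D_{F\cup G}v_m$ evaluated at $\mathbf a$, with $V_m(F,j)=0$ for $j<0$. *)

theory Defs
  imports "HOL-Analysis.Analysis"
begin

text \<open>Points of Z^d are integer vectors indexed by a finite type 'd; edges are
unordered pairs (two-element sets) of nearest neighbours; configurations are
real-valued functions on edges; vector fields on oriented edges are functions of
two points.\<close>

type_synonym 'd pt = "int ^ 'd"
type_synonym 'd edge = "'d pt set"
type_synonym 'd conf = "'d edge \<Rightarrow> real"

definition nn :: "'d::finite pt \<Rightarrow> 'd pt \<Rightarrow> bool" where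
  "nn x y \<longleftrightarrow> (\<Sum>i\<in>UNIV. \<bar>x $ i - y $ i\<bar>) = 1"

definition box :: "nat \<Rightarrow> 'd::finite pt set" where
  "box m = {x. \<forall>i. \<bar>real_of_int (x $ i)\<bar> < 3 ^ m / 2}"

definition edges :: "'d::finite pt set \<Rightarrow> 'd edge set" where
  "edges U = {{x, y} | x y. x \<in> U \<and> y \<in> U \<and> nn x y}"

definition bdry :: "'d::finite pt set \<Rightarrow> 'd pt set" where
  "bdry U = {x \<in> U. \<exists>y. nn x y \<and> y \<notin> U}"

definition intr :: "'d::finite pt set \<Rightarrow> 'd pt set" where
  "intr U = U - bdry U"

definition grad :: "('d pt \<Rightarrow> real) \<Rightarrow> 'd pt \<Rightarrow> 'd pt \<Rightarrow> real" where
  "grad u x y = u y - u x"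

definition cmul :: "'d conf \<Rightarrow> ('d pt \<Rightarrow> 'd pt \<Rightarrow> real) \<Rightarrow> 'd pt \<Rightarrow> 'd pt \<Rightarrow> real" where
  "cmul b W x y = b {x, y} * W x y"

definition dvg :: "('d::finite pt \<Rightarrow> 'd pt \<Rightarrow> real) \<Rightarrow> 'd pt \<Rightarrow> real" where
  "dvg W x = (\<Sum>y\<in>{y. nn x y}. W x y)"

definition cupd :: "'d conf \<Rightarrow> 'd edge set \<Rightarrow> 'd conf" where
  "cupd a G e = (if e \<in> G then 1 else a e)"

definition Dop :: "'d edge set \<Rightarrow> ('d conf \<Rightarrow> 'd pt \<Rightarrow> real) \<Rightarrow> 'd conf \<Rightarrow> 'd pt \<Rightarrow> real" where
  "Dop G f a x = (\<Sum>G'\<in>Pow G. (-1) ^ card (G - G') * f (cupd a G') x)"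

definition Vm :: "nat \<Rightarrow> ('d::finite conf \<Rightarrow> 'd pt \<Rightarrow> real) \<Rightarrow> 'd conf \<Rightarrow> 'd edge set \<Rightarrow> int \<Rightarrow> 'd pt \<Rightarrow> real" where
  "Vm m v a F j x = (if j < 0 then 0 else
     (\<Sum>G\<in>{G. G \<subseteq> edges (box m) - F \<and> card G = nat j}. Dop (F \<union> G) v a x))"

definition Wm :: "nat \<Rightarrow> ('d::finite conf \<Rightarrow> 'd pt \<Rightarrow> real) \<Rightarrow> 'd conf \<Rightarrow> 'd edge set \<Rightarrow> int \<Rightarrow> 'd pt \<Rightarrow> 'd pt \<Rightarrow> real" where
  "Wm m v a F j x y =
     (\<Sum>e\<in>edges (box m) - F. (cupd a {e} {x, y} - a {x, y}) *
        (grad (Vm m v a F (j - 1)) x y - grad (Vm m v a (F \<union> {e}) (j - 2)) x y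
         + grad (Vm m v a (F \<union> {e}) (j - 1)) x y))
   + (\<Sum>e\<in>F. (cupd a {e} {x, y} - a {x, y}) *
        (grad (Vm m v a (F - {e}) j) x y - grad (Vm m v a F (j - 1)) x y))"

end

theory Submission
  imports Defs
begin


definition DD :: "'a set \<Rightarrow> ('a set \<Rightarrow> real) \<Rightarrow> real" where
  "DD H g = (\<Sum>G'\<in>Pow H. (-1) ^ card (H - G') * g G')"

definition SS :: "'a set \<Rightarrow> 'a set \<Rightarrow> nat \<Rightarrow> 'a set set" where
  "SS E F k = {G. G \<subseteq> E - F \<and> card G = k}"

definition VV :: "'a set \<Rightarrow> 'a set \<Rightarrow> nat \<Rightarrow> ('a set \<Rightarrow> real) \<Rightarrow> real" where
  "VV E F k g = (\<Sum>G\<in>SS E F k. DD (F \<union> G) g)"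

lemma SS_finite: "finite E \<Longrightarrow> finite (SS E F k)"
  unfolding SS_def by (rule finite_subset[of _ "Pow E"]) auto

lemma Pminus:
  fixes g :: "'a set \<Rightarrow> real"
  assumes "finite H" "e \<in> H"
  shows "(\<Sum>G'\<in>Pow H. (if e \<in> G' then 0 else 1) * ((-1) ^ card (H - G') * g G')) = - DD (H - {e}) g"
proof -
  have "(\<Sum>G'\<in>Pow H. (if e \<in> G' then 0 else 1) * ((-1) ^ card (H - G') * g G'))
      = (\<Sum>G'\<in>Pow H. if e \<notin> G' then (-1) ^ card (H - G') * g G' else 0)"
    by (rule sum.cong) auto
  also have "\<dots> = (\<Sum>G'\<in>{G'\<in>Pow H. e \<notin> G'}. (-1) ^ card (H - G') * g G')"
    by (subst sum.inter_filter) (auto simp: assms intro!: sum.cong)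
  also have "{G'\<in>Pow H. e \<notin> G'} = Pow (H - {e})" by auto
  also have "(\<Sum>G'\<in>Pow (H - {e}). (-1) ^ card (H - G') * g G') = (\<Sum>G'\<in>Pow (H - {e}). - ((-1) ^ card (H - {e} - G') * g G'))"
  proof (rule sum.cong)
    fix G' assume "G' \<in> Pow (H - {e})"
    then have "H - G' = insert e (H - {e} - G')" "e \<notin> H - {e} - G'" using assms by auto
    moreover have "finite (H - {e} - G')" using assms by auto
    ultimately have "card (H - G') = Suc (card (H - {e} - G'))" by simp
    then show "(-1) ^ card (H - G') * g G' = - ((-1) ^ card (H - {e} - G') * g G')" by simp
  qed simp
  finally show ?thesis unfolding DD_def by (simp add: sum_negf)
qed

lemma Pminus0:
  fixes g :: "'a set \<Rightarrow> real"
  assumes "e \<notin> H"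
  shows "(\<Sum>G'\<in>Pow H. (if e \<in> G' then 0 else 1) * ((-1) ^ card (H - G') * g G')) = DD H g"
  unfolding DD_def using assms by (auto intro!: sum.cong)

lemma Pplus:
  fixes g :: "'a set \<Rightarrow> real"
  assumes "finite H" "e \<in> H"
  shows "(\<Sum>G'\<in>Pow H. (if e \<in> G' then 1 else 0) * ((-1) ^ card (H - G') * g G')) = DD H g + DD (H - {e}) g"
proof -
  have "DD H g = (\<Sum>G'\<in>Pow H. (if e \<in> G' then 1 else 0) * ((-1) ^ card (H - G') * g G'))
     + (\<Sum>G'\<in>Pow H. (if e \<in> G' then 0 else 1) * ((-1) ^ card (H - G') * g G'))"
    unfolding DD_def sum.distrib[symmetric] by (rule sum.cong) auto
  then show ?thesis using Pminus[OF assms, of g] by simp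
qed

lemma Pplus0:
  fixes g :: "'a set \<Rightarrow> real"
  assumes "e \<notin> H"
  shows "(\<Sum>G'\<in>Pow H. (if e \<in> G' then 1 else 0) * ((-1) ^ card (H - G') * g G')) = 0"
  using assms by (intro sum.neutral ballI) (auto dest: subsetD)

lemma sum_SS_mem:
  fixes h :: "'a set \<Rightarrow> real"
  assumes "finite E" "e \<in> E" "e \<notin> F"
  shows "(\<Sum>G\<in>SS E F k. if e \<in> G then h G else 0) =
    (if k = 0 then 0 else (\<Sum>G1\<in>SS E (insert e F) (k - 1). h (insert e G1)))"
proof (cases k)
  case 0
  have e0: "G \<in> SS E F 0 \<Longrightarrow> G = {}" for G
    using assms(1) by (auto simp: SS_def dest: finite_subset)
  show ?thesis using 0 by (auto intro!: sum.neutral dest!: e0)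
next
  case (Suc k')
  have inj: "inj_on (insert e) (SS E (insert e F) k')"
  proof (rule inj_onI)
    fix A B assume "A \<in> SS E (insert e F) k'" "B \<in> SS E (insert e F) k'" "insert e A = insert e B"
    then have "e \<notin> A" "e \<notin> B" "insert e A = insert e B" unfolding SS_def by auto
    then show "A = B" by (metis Diff_insert_absorb)
  qed
  have img: "insert e ` SS E (insert e F) k' = {G\<in>SS E F k. e \<in> G}"
  proof
    show "insert e ` SS E (insert e F) k' \<subseteq> {G\<in>SS E F k. e \<in> G}"
    proof
      fix G assume "G \<in> insert e ` SS E (insert e F) k'"
      then obtain G1 where G1: "G1 \<subseteq> E - insert e F" "card G1 = k'" "G = insert e G1"
        unfolding SS_def by auto
      have "finite G1" using G1(1) assms(1) by (auto dest: finite_subset)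
      moreover have "e \<notin> G1" using G1(1) by auto
      ultimately show "G \<in> {G\<in>SS E F k. e \<in> G}" using G1 assms Suc by (auto simp: SS_def)
    qed
  next
    show "{G\<in>SS E F k. e \<in> G} \<subseteq> insert e ` SS E (insert e F) k'"
    proof
      fix G assume G: "G \<in> {G\<in>SS E F k. e \<in> G}"
      then have "G \<subseteq> E - F" "card G = Suc k'" "e \<in> G" using Suc by (auto simp: SS_def)
      moreover have "finite G" using \<open>G \<subseteq> E - F\<close> assms(1) by (auto dest: finite_subset)
      ultimately have "G - {e} \<in> SS E (insert e F) k'" "G = insert e (G - {e})"
        by (auto simp: SS_def)
      then show "G \<in> insert e ` SS E (insert e F) k'" by blast
    qed
  qed
  have "(\<Sum>G\<in>SS E F k. if e \<in> G then h G else 0) = (\<Sum>G\<in>{G\<in>SS E F k. e \<in> G}. h G)"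
    by (subst sum.inter_filter) (auto simp: SS_finite assms(1) intro!: sum.cong)
  also have "\<dots> = (\<Sum>G1\<in>SS E (insert e F) k'. h (insert e G1))"
    unfolding img[symmetric] by (simp add: sum.reindex[OF inj])
  finally show ?thesis using Suc by simp
qed

lemma comb_A:
  fixes g :: "'a set \<Rightarrow> real"
  assumes "finite E" "F \<subseteq> E" "e \<in> E" "e \<notin> F"
  shows "(\<Sum>G\<in>SS E F j. \<Sum>G'\<in>Pow (F \<union> G). (if e \<in> G' then 1 else 0) * ((-1) ^ card (F \<union> G - G') * g G'))
    = (if j = 0 then 0 else VV E (insert e F) (j - 1) g + VV E F (j - 1) g
        - (if j < 2 then 0 else VV E (insert e F) (j - 2) g))"
proof -
  have fin: "G \<in> SS E F' k \<Longrightarrow> finite (F \<union> G)" for G F' k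
    using assms by (auto simp: SS_def dest: finite_subset)
  have split: "VV E F k g = (\<Sum>G\<in>SS E F k. if e \<in> G then DD (F \<union> G) g else 0)
       + (\<Sum>G\<in>SS E (insert e F) k. DD (F \<union> G) g)" for k
  proof -
    have "VV E F k g = (\<Sum>G\<in>SS E F k. if e \<in> G then DD (F \<union> G) g else 0)
       + (\<Sum>G\<in>SS E F k. if e \<in> G then 0 else DD (F \<union> G) g)"
      unfolding VV_def sum.distrib[symmetric] by (rule sum.cong) auto
    also have "(\<Sum>G\<in>SS E F k. if e \<in> G then 0 else DD (F \<union> G) g) = (\<Sum>G\<in>{G\<in>SS E F k. e \<notin> G}. DD (F \<union> G) g)"
      by (subst sum.inter_filter) (auto simp: SS_finite assms(1) intro!: sum.cong)
    also have "{G\<in>SS E F k. e \<notin> G} = SS E (insert e F) k" by (auto simp: SS_def)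
    finally show ?thesis .
  qed
  have rest: "(\<Sum>G\<in>SS E (insert e F) k. DD (F \<union> G) g) = VV E F k g - (if k = 0 then 0 else VV E (insert e F) (k - 1) g)" for k
  proof -
    have "(\<Sum>G\<in>SS E F k. if e \<in> G then DD (F \<union> G) g else 0) = (if k = 0 then 0 else VV E (insert e F) (k - 1) g)"
      unfolding sum_SS_mem[OF assms(1,3,4)] VV_def by simp
    then show ?thesis using split[of k] by simp
  qed
  have "(\<Sum>G\<in>SS E F j. \<Sum>G'\<in>Pow (F \<union> G). (if e \<in> G' then 1 else 0) * ((-1) ^ card (F \<union> G - G') * g G'))
     = (\<Sum>G\<in>SS E F j. if e \<in> G then DD (F \<union> G) g + DD (F \<union> G - {e}) g else 0)"
  proof (rule sum.cong)
    fix G assume G: "G \<in> SS E F j"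
    show "(\<Sum>G'\<in>Pow (F \<union> G). (if e \<in> G' then 1 else 0) * ((-1) ^ card (F \<union> G - G') * g G'))
      = (if e \<in> G then DD (F \<union> G) g + DD (F \<union> G - {e}) g else 0)"
      using Pplus[OF fin[OF G], of e g] Pplus0[of e "F \<union> G" g] assms(4) by auto
  qed simp
  also have "\<dots> = (if j = 0 then 0 else (\<Sum>G1\<in>SS E (insert e F) (j - 1).
       DD (F \<union> insert e G1) g + DD (F \<union> insert e G1 - {e}) g))"
    by (rule sum_SS_mem[OF assms(1,3,4)])
  also have "\<dots> = (if j = 0 then 0 else (\<Sum>G1\<in>SS E (insert e F) (j - 1).
       DD (insert e F \<union> G1) g + DD (F \<union> G1) g))"
  proof -
    have "G1 \<in> SS E (insert e F) k \<Longrightarrow> F \<union> insert e G1 - {e} = F \<union> G1" for G1 k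
      using assms(4) by (auto simp: SS_def)
    then show ?thesis by (auto intro!: sum.cong)
  qed
  also have "\<dots> = (if j = 0 then 0 else VV E (insert e F) (j - 1) g + VV E F (j - 1) g
        - (if j < 2 then 0 else VV E (insert e F) (j - 2) g))"
    unfolding sum.distrib rest VV_def[of E "insert e F"] by (auto simp: VV_def numeral_2_eq_2)
  finally show ?thesis .
qed

lemma comb_C:
  fixes g :: "'a set \<Rightarrow> real"
  assumes "finite E" "F \<subseteq> E" "e \<in> F"
  shows "(\<Sum>G\<in>SS E F j. \<Sum>G'\<in>Pow (F \<union> G). (if e \<in> G' then 0 else 1) * ((-1) ^ card (F \<union> G - G') * g G'))
    = - (VV E (F - {e}) j g - (if j = 0 then 0 else VV E F (j - 1) g))"
proof -
  have fin: "G \<in> SS E F' k \<Longrightarrow> finite (F \<union> G)" for G F' k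
    using assms by (auto simp: SS_def dest: finite_subset)
  have eE: "e \<in> E" "e \<notin> F - {e}" using assms by auto
  have ins: "insert e (F - {e}) = F" using assms by auto
  have "(\<Sum>G\<in>SS E F j. \<Sum>G'\<in>Pow (F \<union> G). (if e \<in> G' then 0 else 1) * ((-1) ^ card (F \<union> G - G') * g G'))
      = (\<Sum>G\<in>SS E F j. - DD (F \<union> G - {e}) g)"
  proof (rule sum.cong)
    fix G assume "G \<in> SS E F j"
    then show "(\<Sum>G'\<in>Pow (F \<union> G). (if e \<in> G' then 0 else 1) * ((-1) ^ card (F \<union> G - G') * g G')) = - DD (F \<union> G - {e}) g"
      using Pminus[OF fin, of G F j e g] assms(3) by auto
  qed simp
  also have "\<dots> = - (\<Sum>G\<in>SS E F j. DD (F \<union> G - {e}) g)" by (simp add: sum_negf)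
  finally have L: "(\<Sum>G\<in>SS E F j. \<Sum>G'\<in>Pow (F \<union> G). (if e \<in> G' then 0 else 1) * ((-1) ^ card (F \<union> G - G') * g G'))
      = - (\<Sum>G\<in>SS E F j. DD (F \<union> G - {e}) g)" .
  have "VV E (F - {e}) j g = (\<Sum>G\<in>SS E (F - {e}) j. if e \<in> G then DD (F - {e} \<union> G) g else 0)
       + (\<Sum>G\<in>SS E (F - {e}) j. if e \<in> G then 0 else DD (F - {e} \<union> G) g)"
    unfolding VV_def sum.distrib[symmetric] by (rule sum.cong) auto
  also have "(\<Sum>G\<in>SS E (F - {e}) j. if e \<in> G then DD (F - {e} \<union> G) g else 0) = (if j = 0 then 0 else VV E F (j - 1) g)"
  proof -
    have "G1 \<in> SS E F k \<Longrightarrow> F - {e} \<union> insert e G1 = F \<union> G1" for G1 k using assms(3) by auto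
    then show ?thesis unfolding sum_SS_mem[OF assms(1) eE] ins VV_def by (auto intro!: sum.cong)
  qed
  also have "(\<Sum>G\<in>SS E (F - {e}) j. if e \<in> G then 0 else DD (F - {e} \<union> G) g) = (\<Sum>G\<in>{G\<in>SS E (F - {e}) j. e \<notin> G}. DD (F - {e} \<union> G) g)"
    by (subst sum.inter_filter) (auto simp: SS_finite assms(1) intro!: sum.cong)
  also have "{G\<in>SS E (F - {e}) j. e \<notin> G} = SS E F j" using assms by (auto simp: SS_def)
  also have "(\<Sum>G\<in>SS E F j. DD (F - {e} \<union> G) g) = (\<Sum>G\<in>SS E F j. DD (F \<union> G - {e}) g)"
    using assms(3) by (intro sum.cong refl arg_cong[where f="\<lambda>X. DD X g"]) (auto simp: SS_def)
  finally show ?thesis using L by simp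
qed



definition Lop :: "'a set \<Rightarrow> ('a set \<Rightarrow> real) \<Rightarrow> 'a \<Rightarrow> ('a \<Rightarrow> real) \<Rightarrow> real" where
  "Lop N c x u = (\<Sum>y\<in>N. c {x, y} * (u y - u x))"

lemma Lop_sum: "Lop N c x (\<lambda>z. \<Sum>i\<in>I. w i z) = (\<Sum>i\<in>I. Lop N c x (w i))"
proof -
  have "Lop N c x (\<lambda>z. \<Sum>i\<in>I. w i z) = (\<Sum>y\<in>N. \<Sum>i\<in>I. c {x, y} * (w i y - w i x))"
    unfolding Lop_def by (simp add: sum_subtractf[symmetric] sum_distrib_left)
  also have "\<dots> = (\<Sum>i\<in>I. Lop N c x (w i))" unfolding Lop_def by (rule sum.swap)
  finally show ?thesis .
qed

lemma Lop_scale: "Lop N c x (\<lambda>z. k * w z) = k * Lop N c x w"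
  unfolding Lop_def sum_distrib_left by (rule sum.cong) (simp_all add: algebra_simps)

lemma Lop_combo: "Lop N c x (\<lambda>z. A z - B z + C z) = Lop N c x A - Lop N c x B + Lop N c x C"
  unfolding Lop_def sum_subtractf[symmetric] sum.distrib[symmetric] by (rule sum.cong) (simp_all add: algebra_simps)

lemma Lop_diff: "Lop N c x (\<lambda>z. A z - B z) = Lop N c x A - Lop N c x B"
  unfolding Lop_def sum_subtractf[symmetric] by (rule sum.cong) (simp_all add: algebra_simps)

lemma Lop_neg: "Lop N c x (\<lambda>z. - A z) = - Lop N c x A"
  unfolding Lop_def sum_negf[symmetric] by (rule sum.cong) (simp_all add: algebra_simps)

lemma Lop_conf:
  "Lop N (\<lambda>e'. c0 e' + (\<Sum>i\<in>I. p i * c i e') - (\<Sum>i\<in>J. q i * d i e')) x u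
   = Lop N c0 x u + (\<Sum>i\<in>I. p i * Lop N (c i) x u) - (\<Sum>i\<in>J. q i * Lop N (d i) x u)"
proof -
  have 1: "(\<Sum>i\<in>I. p i * Lop N (c i) x u) = (\<Sum>y\<in>N. (\<Sum>i\<in>I. p i * c i {x, y}) * (u y - u x))"
    unfolding Lop_def sum_distrib_left sum_distrib_right by (subst sum.swap) (simp add: mult.assoc)
  have 2: "(\<Sum>i\<in>J. q i * Lop N (d i) x u) = (\<Sum>y\<in>N. (\<Sum>i\<in>J. q i * d i {x, y}) * (u y - u x))"
    unfolding Lop_def sum_distrib_left sum_distrib_right by (subst sum.swap) (simp add: mult.assoc)
  show ?thesis unfolding 1 2 unfolding Lop_def
    unfolding sum_subtractf[symmetric] sum.distrib[symmetric] by (rule sum.cong) (simp_all add: algebra_simps)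
qed

lemma finite_box: "finite (box m :: 'd::finite pt set)"
proof -
  let ?N = "(3::int) ^ m"
  have "(box m :: 'd pt set) \<subseteq> vec_lambda ` (PiE UNIV (\<lambda>_. {-?N..?N}))"
  proof
    fix x :: "'d pt" assume "x \<in> box m"
    then have h: "\<bar>real_of_int (x $ i)\<bar> < 3 ^ m / 2" for i unfolding box_def by auto
    have "\<bar>x $ i\<bar> \<le> ?N" for i
    proof -
      have "real_of_int \<bar>x $ i\<bar> \<le> real_of_int ?N" using h[of i] by simp
      then show ?thesis by linarith
    qed
    then have "\<forall>i. x $ i \<in> {-?N..?N}" by (metis abs_le_iff atLeastAtMost_iff minus_le_iff)
    then have "(\<lambda>i. x $ i) \<in> PiE UNIV (\<lambda>_. {-?N..?N})" by (simp add: PiE_iff)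
    moreover have "x = vec_lambda (\<lambda>i. x $ i)" by simp
    ultimately show "x \<in> vec_lambda ` (PiE UNIV (\<lambda>_. {-?N..?N}))" by blast
  qed
  then show ?thesis by (rule finite_subset) (intro finite_imageI finite_PiE; simp)
qed

lemma finite_edges: "finite U \<Longrightarrow> finite (edges U)"
proof -
  assume "finite U"
  have "edges U \<subseteq> (\<lambda>p. {fst p, snd p}) ` (U \<times> U)" unfolding edges_def by force
  then show ?thesis by (rule finite_subset) (simp add: \<open>finite U\<close>)
qed

lemma cupd_empty: "cupd a {} = a" unfolding cupd_def by auto

lemma cupd_insert: "cupd a (insert e G) = cupd (cupd a G) {e}"
  unfolding cupd_def by auto

lemma Vm_eq: "Vm m v a F i z = (if i < 0 then 0 else VV (edges (box m)) F (nat i) (\<lambda>G'. v (cupd a G') z))"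
  unfolding Vm_def VV_def SS_def DD_def Dop_def by simp

lemma swap3:
  fixes f :: "'i \<Rightarrow> 'a \<Rightarrow> 'b \<Rightarrow> real"
  shows "(\<Sum>G\<in>S. \<Sum>G'\<in>P G. s G G' * (\<Sum>e\<in>I. f e G G')) = (\<Sum>e\<in>I. \<Sum>G\<in>S. \<Sum>G'\<in>P G. s G G' * f e G G')"
proof -
  have "(\<Sum>G\<in>S. \<Sum>G'\<in>P G. s G G' * (\<Sum>e\<in>I. f e G G')) = (\<Sum>G\<in>S. \<Sum>G'\<in>P G. \<Sum>e\<in>I. s G G' * f e G G')"
    by (simp only: sum_distrib_left)
  also have "\<dots> = (\<Sum>G\<in>S. \<Sum>e\<in>I. \<Sum>G'\<in>P G. s G G' * f e G G')"
    by (rule sum.cong[OF refl], rule sum.swap)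
  also have "\<dots> = (\<Sum>e\<in>I. \<Sum>G\<in>S. \<Sum>G'\<in>P G. s G G' * f e G G')" by (rule sum.swap)
  finally show ?thesis .
qed

theorem lemma3p5:
  fixes m :: nat and \<xi> :: "real ^ 'd::finite" and \<Omega> :: "'d conf set"
    and v :: "'d conf \<Rightarrow> 'd pt \<Rightarrow> real" and a :: "'d conf"
    and F :: "'d edge set" and j :: nat
  assumes "a \<in> \<Omega>"
    and "\<And>b e. b \<in> \<Omega> \<Longrightarrow> cupd b {e} \<in> \<Omega>"
    and "\<And>b x. b \<in> \<Omega> \<Longrightarrow> x \<in> bdry (box m) \<Longrightarrow>
           v b x = \<xi> \<bullet> (\<chi> i. real_of_int (x $ i))"
    and "\<And>b x. b \<in> \<Omega> \<Longrightarrow> x \<in> intr (box m) \<Longrightarrow> dvg (cmul b (grad (v b))) x = 0"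
    and "F \<subseteq> edges (box m)"
  shows "\<forall>x\<in>intr (box m).
           - dvg (cmul (cupd a F) (grad (Vm m v a F (int j)))) x = dvg (Wm m v a F (int j)) x"
proof
  fix x :: "'d pt" assume x: "x \<in> intr (box m)"
  define E where "E = (edges (box m) :: 'd edge set)"
  have finE: "finite E" unfolding E_def by (intro finite_edges finite_box)
  have FE: "F \<subseteq> E" using assms(5) unfolding E_def .
  define N where "N = {y. nn x y}"
  define g where "g z = (\<lambda>G'. v (cupd a G') z)" for z
  define \<delta> where "\<delta> e = (\<lambda>e'. cupd a {e} e' - a e')" for e :: "'d edge"
  have Om: "finite G \<Longrightarrow> cupd a G \<in> \<Omega>" for G
  proof (induction G rule: finite_induct)
    case empty then show ?case using assms(1) by (simp add: cupd_empty)
  next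
    case (insert e G) then show ?case using assms(2) by (subst cupd_insert) blast
  qed
  have dv: "dvg (cmul c (grad u)) x = Lop N c x u" for c u
    unfolding dvg_def cmul_def grad_def Lop_def N_def ..
  have harm: "G' \<subseteq> E \<Longrightarrow> Lop N (cupd a G') x (v (cupd a G')) = 0" for G'
  proof -
    assume G': "G' \<subseteq> E"
    have "finite G'" using finite_subset[OF G' finE] .
    then show ?thesis using assms(4)[OF Om[OF \<open>finite G'\<close>] x] unfolding dv by simp
  qed
  have ci: "cupd a G' = (\<lambda>e'. cupd a F e' + (\<Sum>e\<in>E-F. (if e \<in> G' then 1 else 0) * \<delta> e e')
       - (\<Sum>e\<in>F. (if e \<in> G' then 0 else 1) * \<delta> e e'))" if G': "G' \<subseteq> E" for G'
  proof
    fix e'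
    have s1: "(\<Sum>e\<in>E-F. (if e \<in> G' then 1 else 0) * \<delta> e e') = (if e' \<in> (E - F) \<inter> G' then 1 - a e' else 0)"
    proof -
      have "(\<Sum>e\<in>E-F. (if e \<in> G' then 1 else 0) * \<delta> e e') = (\<Sum>e\<in>E-F. if e' = e then (if e' \<in> G' then 1 - a e' else 0) else 0)"
        by (rule sum.cong) (auto simp: \<delta>_def cupd_def)
      also have "\<dots> = (if e' \<in> (E - F) \<inter> G' then 1 - a e' else 0)"
        using finE by (subst sum.delta') auto
      finally show ?thesis .
    qed
    have s2: "(\<Sum>e\<in>F. (if e \<in> G' then 0 else 1) * \<delta> e e') = (if e' \<in> F - G' then 1 - a e' else 0)"
    proof -
      have "(\<Sum>e\<in>F. (if e \<in> G' then 0 else 1) * \<delta> e e') = (\<Sum>e\<in>F. if e' = e then (if e' \<notin> G' then 1 - a e' else 0) else 0)"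
        by (rule sum.cong) (auto simp: \<delta>_def cupd_def)
      also have "\<dots> = (if e' \<in> F - G' then 1 - a e' else 0)"
        using finite_subset[OF FE finE] by (subst sum.delta') auto
      finally show ?thesis .
    qed
    show "cupd a G' e' = cupd a F e' + (\<Sum>e\<in>E-F. (if e \<in> G' then 1 else 0) * \<delta> e e')
       - (\<Sum>e\<in>F. (if e \<in> G' then 0 else 1) * \<delta> e e')"
      unfolding s1 s2 using G' by (auto simp: cupd_def)
  qed
  have dec: "Lop N (cupd a F) x (v (cupd a G')) =
      - ((\<Sum>e\<in>E-F. (if e \<in> G' then 1 else 0) * Lop N (\<delta> e) x (v (cupd a G')))
       - (\<Sum>e\<in>F. (if e \<in> G' then 0 else 1) * Lop N (\<delta> e) x (v (cupd a G'))))" if G': "G' \<subseteq> E" for G'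
  proof -
    have "0 = Lop N (cupd a G') x (v (cupd a G'))" using harm[OF G'] by simp
    also have "\<dots> = Lop N (cupd a F) x (v (cupd a G')) + (\<Sum>e\<in>E-F. (if e \<in> G' then 1 else 0) * Lop N (\<delta> e) x (v (cupd a G')))
       - (\<Sum>e\<in>F. (if e \<in> G' then 0 else 1) * Lop N (\<delta> e) x (v (cupd a G')))"
      by (subst ci[OF G']) (rule Lop_conf)
    finally show ?thesis by linarith
  qed
  have VmE: "Vm m v a F' i = (\<lambda>z. if i < 0 then 0 else VV E F' (nat i) (g z))" for F' i
    unfolding E_def g_def by (rule ext) (rule Vm_eq)
  define s where "s G G' = ((-1::real) ^ card (F \<union> G - G'))" for G G' :: "'d edge set"
  have Gsub: "G \<in> SS E F j \<Longrightarrow> G' \<in> Pow (F \<union> G) \<Longrightarrow> G' \<subseteq> E" for G G'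
    using FE by (auto simp: SS_def)
  define P where "P e z = (\<Sum>G\<in>SS E F j. \<Sum>G'\<in>Pow (F \<union> G). (if e \<in> G' then 1 else 0) * (s G G' * g z G'))" for e z
  define Q where "Q e z = (\<Sum>G\<in>SS E F j. \<Sum>G'\<in>Pow (F \<union> G). (if e \<in> G' then 0 else 1) * (s G G' * g z G'))" for e z
  define LL where "LL e G' = Lop N (\<delta> e) x (v (cupd a G'))" for e G'
  have LP: "Lop N (\<delta> e) x (P e) = (\<Sum>G\<in>SS E F j. \<Sum>G'\<in>Pow (F \<union> G). s G G' * ((if e \<in> G' then 1 else 0) * LL e G'))" for e
  proof -
    have "Lop N (\<delta> e) x (P e) = (\<Sum>G\<in>SS E F j. \<Sum>G'\<in>Pow (F \<union> G). (if e \<in> G' then 1 else 0) * (s G G' * LL e G'))"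
      unfolding P_def LL_def g_def by (simp only: Lop_sum Lop_scale)
    then show ?thesis by (simp only: mult.left_commute)
  qed
  have LQ: "Lop N (\<delta> e) x (\<lambda>z. - Q e z) = (\<Sum>G\<in>SS E F j. \<Sum>G'\<in>Pow (F \<union> G). s G G' * (- ((if e \<in> G' then 0 else 1) * LL e G')))" for e
  proof -
    have "Lop N (\<delta> e) x (\<lambda>z. - Q e z) = - (\<Sum>G\<in>SS E F j. \<Sum>G'\<in>Pow (F \<union> G). (if e \<in> G' then 0 else 1) * (s G G' * LL e G'))"
      unfolding Q_def LL_def g_def by (simp only: Lop_neg Lop_sum Lop_scale)
    then show ?thesis by (simp only: mult.left_commute sum_negf mult_minus_right)
  qed
  have step1: "- dvg (cmul (cupd a F) (grad (Vm m v a F (int j)))) x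
      = - Lop N (cupd a F) x (\<lambda>z. \<Sum>G\<in>SS E F j. \<Sum>G'\<in>Pow (F \<union> G). s G G' * v (cupd a G') z)"
    unfolding dv VmE by (simp add: VV_def DD_def g_def s_def)
  have step2: "Lop N (cupd a F) x (\<lambda>z. \<Sum>G\<in>SS E F j. \<Sum>G'\<in>Pow (F \<union> G). s G G' * v (cupd a G') z)
     = (\<Sum>G\<in>SS E F j. \<Sum>G'\<in>Pow (F \<union> G). s G G' * Lop N (cupd a F) x (v (cupd a G')))"
    by (simp only: Lop_sum Lop_scale)
  have step3: "- (\<Sum>G\<in>SS E F j. \<Sum>G'\<in>Pow (F \<union> G). s G G' * Lop N (cupd a F) x (v (cupd a G')))
     = (\<Sum>G\<in>SS E F j. \<Sum>G'\<in>Pow (F \<union> G). s G G' *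
       ((\<Sum>e\<in>E-F. (if e \<in> G' then 1 else 0) * LL e G')
       + (\<Sum>e\<in>F. - ((if e \<in> G' then 0 else 1) * LL e G'))))"
    unfolding sum_negf[symmetric]
  proof (rule sum.cong[OF refl], rule sum.cong[OF refl])
    fix G G' assume "G \<in> SS E F j" "G' \<in> Pow (F \<union> G)"
    then have G': "G' \<subseteq> E" by (rule Gsub)
    show "- (s G G' * Lop N (cupd a F) x (v (cupd a G'))) = s G G' *
       ((\<Sum>e\<in>E-F. (if e \<in> G' then 1 else 0) * LL e G')
       + (\<Sum>e\<in>F. - ((if e \<in> G' then 0 else 1) * LL e G')))"
      unfolding dec[OF G'] LL_def sum_negf by (simp add: algebra_simps)
  qed
  have step4: "(\<Sum>G\<in>SS E F j. \<Sum>G'\<in>Pow (F \<union> G). s G G' *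
       ((\<Sum>e\<in>E-F. (if e \<in> G' then 1 else 0) * LL e G')
       + (\<Sum>e\<in>F. - ((if e \<in> G' then 0 else 1) * LL e G'))))
     = (\<Sum>e\<in>E-F. Lop N (\<delta> e) x (P e)) + (\<Sum>e\<in>F. Lop N (\<delta> e) x (\<lambda>z. - Q e z))"
    unfolding LP LQ distrib_left sum.distrib swap3 ..
  have natS: "nat (1 + int n) = Suc n" for n by arith
  have step5: "(\<Sum>e\<in>E-F. Lop N (\<delta> e) x (P e)) + (\<Sum>e\<in>F. Lop N (\<delta> e) x (\<lambda>z. - Q e z))
     = (\<Sum>e\<in>E-F. Lop N (\<delta> e) x (\<lambda>z. Vm m v a F (int j - 1) z - Vm m v a (F \<union> {e}) (int j - 2) z + Vm m v a (F \<union> {e}) (int j - 1) z))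
     + (\<Sum>e\<in>F. Lop N (\<delta> e) x (\<lambda>z. Vm m v a (F - {e}) (int j) z - Vm m v a F (int j - 1) z))"
  proof (intro arg_cong2[where f="(+)"] sum.cong refl arg_cong[where f="Lop N _ x"] ext)
    fix e z assume e: "e \<in> E - F"
    show "P e z = Vm m v a F (int j - 1) z - Vm m v a (F \<union> {e}) (int j - 2) z + Vm m v a (F \<union> {e}) (int j - 1) z"
      using comb_A[OF finE FE, where e=e and j=j and g="g z"] e unfolding s_def VmE P_def
      by (cases j) (auto simp: nat_diff_distrib)
  next
    fix e z assume e: "e \<in> F"
    show "- Q e z = Vm m v a (F - {e}) (int j) z - Vm m v a F (int j - 1) z"
      using comb_C[OF finE FE e, where j=j and g="g z"] unfolding s_def VmE Q_def
      by (cases j) (auto simp: natS)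
  qed
  have step6: "(\<Sum>e\<in>E-F. Lop N (\<delta> e) x (\<lambda>z. Vm m v a F (int j - 1) z - Vm m v a (F \<union> {e}) (int j - 2) z + Vm m v a (F \<union> {e}) (int j - 1) z))
     + (\<Sum>e\<in>F. Lop N (\<delta> e) x (\<lambda>z. Vm m v a (F - {e}) (int j) z - Vm m v a F (int j - 1) z))
     = dvg (Wm m v a F (int j)) x"
  proof -
    have "dvg (Wm m v a F (int j)) x =
       (\<Sum>y\<in>N. \<Sum>e\<in>E-F. \<delta> e {x, y} * ((Vm m v a F (int j - 1) y - Vm m v a (F \<union> {e}) (int j - 2) y + Vm m v a (F \<union> {e}) (int j - 1) y)
          - (Vm m v a F (int j - 1) x - Vm m v a (F \<union> {e}) (int j - 2) x + Vm m v a (F \<union> {e}) (int j - 1) x)))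
     + (\<Sum>y\<in>N. \<Sum>e\<in>F. \<delta> e {x, y} * ((Vm m v a (F - {e}) (int j) y - Vm m v a F (int j - 1) y)
          - (Vm m v a (F - {e}) (int j) x - Vm m v a F (int j - 1) x)))"
      unfolding dvg_def Wm_def N_def[symmetric] E_def[symmetric] sum.distrib \<delta>_def grad_def
      by (intro arg_cong2[where f="(+)"] sum.cong refl arg_cong[where f="(*) _"]) simp_all
    then show ?thesis unfolding Lop_def by (simp only: sum.swap[of _ N])
  qed
  note steps = step1 step2 step3 step4 step5 step6
  show "- dvg (cmul (cupd a F) (grad (Vm m v a F (int j)))) x = dvg (Wm m v a F (int j)) x"
    using steps by linarith
qed

end
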